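(* Let $p\in(0,1)$, $\varepsilon>0$, and let $\mathcal{C}\subseteq\mathbb{F}_2^{m\times n}$ be a fixed $\mathbb{F}_2$-linear rank metric code with $T_{\mathcal{C}}<1$ (so $S_{\mathcal{C}}<2$). Then $$\Pr_{Y\sim\mathbb{F}_2^{m\times n}}\left[S_{\mathcal{C}+\{0,Y\}}>1+2T_{\mathcal{C}}+T_{\mathcal{C}}^{1.5}\right]<T_{\mathcal{C}}^{0.5},$$ where $Y$ is uniform.
   Context: $\mathcal{B}_R(X,pn)=\{Z\in\mathbb{F}_2^{m\times n}:\mathrm{rank}(X-Z)\le pn\}$; $L_{\mathcal{C}}(X)=|\mathcal{B}_R(X,pn)\cap\mathcal{C}|$; $A_{\mathcal{C}}(X)=2^{\frac{\varepsilon}{1+\varepsilon}nL_{\mathcal{C}}(X)}$; $S_{\mathcal{C}}=\mathbb{E}_{X\sim\mathbb{F}_2^{m\times n}}[A_{\mathcal{C}}(X)]$ ($X$ uniform); $T_{\mathcal{C}}=S_{\mathcal{C}}-1$. $\mathcal{C}+\{0,Y\}=\mathcal{C}\cup(\mathcal{C}+Y)$. *)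

theory Defs
  imports "HOL-Analysis.Analysis" "HOL-Library.Z2"
begin

instance bit :: finite
proof
  have "(UNIV :: bit set) = {0, 1}"
    using bit_not_zero_iff by blast
  then show "finite (UNIV :: bit set)" by (metis finite.emptyI finite.insertI)
qed

text \<open>m x n matrices over F_2: the type bit^'n^'m (m = CARD('m) rows, n = CARD('n) columns).
  rank is the library rank over a field.\<close>

definition f2_linear :: "(bit^'n^'m) set \<Rightarrow> bool" where
  "f2_linear C \<longleftrightarrow> 0 \<in> C \<and> (\<forall>a\<in>C. \<forall>b\<in>C. a + b \<in> C)
     \<and> (\<forall>c::bit. \<forall>a\<in>C. (\<chi> i j. c * a $ i $ j) \<in> C)"

definition rank_ball :: "real \<Rightarrow> bit^'n^'m \<Rightarrow> (bit^'n^'m) set" where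
  "rank_ball p X = {Z. real (rank (X - Z)) \<le> p * real CARD('n)}"

definition list_size :: "real \<Rightarrow> (bit^'n^'m) set \<Rightarrow> bit^'n^'m \<Rightarrow> nat" where
  "list_size p C X = card (rank_ball p X \<inter> C)"

definition A_fun :: "real \<Rightarrow> real \<Rightarrow> (bit^'n^'m) set \<Rightarrow> bit^'n^'m \<Rightarrow> real" where
  "A_fun p \<epsilon> C X = 2 powr (\<epsilon> / (1 + \<epsilon>) * real CARD('n) * real (list_size p C X))"

definition S_fun :: "real \<Rightarrow> real \<Rightarrow> (bit^'n^'m) set \<Rightarrow> real" where
  "S_fun p \<epsilon> C = (\<Sum>X\<in>UNIV. A_fun p \<epsilon> C X) / real CARD(bit^'n^'m)"

definition T_fun :: "real \<Rightarrow> real \<Rightarrow> (bit^'n^'m) set \<Rightarrow> real" where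
  "T_fun p \<epsilon> C = S_fun p \<epsilon> C - 1"

text \<open>C + {0,Y} = C \<union> (C + Y).\<close>
definition code_extend :: "(bit^'n^'m) set \<Rightarrow> bit^'n^'m \<Rightarrow> (bit^'n^'m) set" where
  "code_extend C Y = C \<union> (\<lambda>c. c + Y) ` C"

end

theory Submission
  imports Defs
begin

lemma rank_zero_bit: "rank (0::bit^'n^'m) = 0"
  unfolding row_rank_def_gen
proof -
  have "rows (0::bit^'n^'m) \<subseteq> {0}" by (auto simp: rows_def row_def vec_eq_iff)
  then show "vec.dim (rows (0::bit^'n^'m)) = 0" by simp
qed

lemma list_size_extend:
  fixes C :: "(bit^'n^'m) set"
  shows "list_size p (code_extend C Y) X \<le> list_size p C X + list_size p C (X - Y)"
proof -
  have "rank_ball p X \<inter> code_extend C Y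
      = (rank_ball p X \<inter> C) \<union> (rank_ball p X \<inter> (\<lambda>c. c + Y) ` C)"
    unfolding code_extend_def by blast
  then have "card (rank_ball p X \<inter> code_extend C Y)
      \<le> card (rank_ball p X \<inter> C) + card (rank_ball p X \<inter> (\<lambda>c. c + Y) ` C)"
    by (simp add: card_Un_le)
  moreover have "card (rank_ball p X \<inter> (\<lambda>c. c + Y) ` C) \<le> card (rank_ball p (X - Y) \<inter> C)"
  proof (rule card_inj_on_le[where f="\<lambda>Z. Z - Y"])
    show "inj_on (\<lambda>Z. Z - Y) (rank_ball p X \<inter> (\<lambda>c. c + Y) ` C)"
      by (auto simp: inj_on_def)
    show "(\<lambda>Z. Z - Y) ` (rank_ball p X \<inter> (\<lambda>c. c + Y) ` C) \<subseteq> rank_ball p (X - Y) \<inter> C"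
      by (auto simp: rank_ball_def algebra_simps)
  qed simp
  ultimately show ?thesis unfolding list_size_def by linarith
qed

lemma A_ge1:
  assumes "0 < \<epsilon>"
  shows "A_fun p \<epsilon> C X \<ge> 1"
  unfolding A_fun_def using assms by (intro ge_one_powr_ge_zero) auto

lemma A_extend:
  fixes C :: "(bit^'n^'m) set"
  assumes "0 < \<epsilon>"
  shows "A_fun p \<epsilon> (code_extend C Y) X \<le> A_fun p \<epsilon> C X * A_fun p \<epsilon> C (X - Y)"
proof -
  let ?k = "\<epsilon> / (1 + \<epsilon>) * real CARD('n)"
  have k: "?k \<ge> 0" using assms by auto
  have "real (list_size p (code_extend C Y) X) \<le> real (list_size p C X) + real (list_size p C (X - Y))"
    using list_size_extend[of p C Y X] by linarith
  then have "?k * real (list_size p (code_extend C Y) X) \<le> ?k * real (list_size p C X) + ?k * real (list_size p C (X - Y))"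
    using k by (metis distrib_left mult_left_mono)
  then have "2 powr (?k * real (list_size p (code_extend C Y) X)) \<le> 2 powr (?k * real (list_size p C X) + ?k * real (list_size p C (X - Y)))"
    by (intro powr_mono) auto
  then show ?thesis unfolding A_fun_def by (simp add: powr_add)
qed

lemma sum_shift:
  fixes f :: "bit^'n^'m \<Rightarrow> real"
  shows "(\<Sum>X\<in>UNIV. f (X - Y)) = (\<Sum>X\<in>UNIV. f X)"
proof -
  have "bij_betw (\<lambda>X. X - Y) UNIV UNIV"
    by (rule bij_betwI[where g="\<lambda>X. X + Y"]) auto
  then show ?thesis by (rule sum.reindex_bij_betw)
qed

theorem lemma7:
  fixes p \<epsilon> :: real and C :: "(bit^'n^'m) set"
  assumes "0 < p" "p < 1" "0 < \<epsilon>"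
    and "f2_linear C"
    and "T_fun p \<epsilon> C < 1"
  shows "real (card {Y :: bit^'n^'m. S_fun p \<epsilon> (code_extend C Y)
            > 1 + 2 * T_fun p \<epsilon> C + T_fun p \<epsilon> C powr 1.5})
           / real CARD(bit^'n^'m)
         < T_fun p \<epsilon> C powr 0.5"
proof -
  define N where "N = real CARD(bit^'n^'m)"
  define A where "A = A_fun p \<epsilon> C"
  define S where "S = S_fun p \<epsilon> C"
  define T where "T = T_fun p \<epsilon> C"
  define G where "G = (\<lambda>Y. (\<Sum>X\<in>UNIV. A X * A (X - Y)) / N)"
  define W where "W = (\<lambda>Y. G Y - (1 + 2 * T))"
  define t where "t = T powr 1.5"
  define E where "E = {Y :: bit^'n^'m. S_fun p \<epsilon> (code_extend C Y) > 1 + 2 * T + t}"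
  have Npos: "N > 0" unfolding N_def by simp
  have A1: "\<And>X. A X \<ge> 1" unfolding A_def using A_ge1 assms(3) by blast
  have sumA: "(\<Sum>X\<in>UNIV. A X) = N * S"
    unfolding S_def S_fun_def A_def N_def by simp
  have T_S: "T = S - 1" unfolding T_def S_def T_fun_def by simp
  have "0 \<in> C" using assms(4) unfolding f2_linear_def by blast
  then have "0 \<in> rank_ball p 0 \<inter> C"
    using assms(1) by (simp add: rank_ball_def rank_zero_bit)
  then have "list_size p C 0 \<ge> 1"
    unfolding list_size_def by (metis One_nat_def Suc_leI card_gt_0_iff empty_iff finite)
  then have "\<epsilon> / (1 + \<epsilon>) * real CARD('n) * real (list_size p C 0) > 0"
    using assms(3) by simp
  then have A0: "A 0 > 1" unfolding A_def A_fun_def by simp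
  have "(\<Sum>X\<in>(UNIV::(bit^'n^'m) set). (1::real)) < (\<Sum>X\<in>UNIV. A X)"
    using A1 A0 by (intro sum_strict_mono_ex1) auto
  then have "N < N * S" using sumA unfolding N_def by simp
  then have "S > 1" using Npos by simp
  then have Tpos: "T > 0" using T_S by simp
  have SG: "\<And>Y. S_fun p \<epsilon> (code_extend C Y) \<le> G Y"
  proof -
    fix Y
    have "(\<Sum>X\<in>UNIV. A_fun p \<epsilon> (code_extend C Y) X) \<le> (\<Sum>X\<in>UNIV. A X * A (X - Y))"
      by (rule sum_mono) (use A_extend assms(3) in \<open>auto simp: A_def\<close>)
    then show "S_fun p \<epsilon> (code_extend C Y) \<le> G Y"
      unfolding S_fun_def G_def N_def by (simp add: divide_right_mono)
  qed
  have W0: "\<And>Y. W Y \<ge> 0"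
  proof -
    fix Y
    have "(\<Sum>X\<in>UNIV. A X + A (X - Y) - 1) \<le> (\<Sum>X\<in>UNIV. A X * A (X - Y))"
    proof (rule sum_mono)
      fix X
      have "0 \<le> (A X - 1) * (A (X - Y) - 1)" using A1 by simp
      then show "A X + A (X - Y) - 1 \<le> A X * A (X - Y)" by (simp add: algebra_simps)
    qed
    moreover have "(\<Sum>X\<in>UNIV. A X + A (X - Y) - 1) = 2 * N * S - N"
      using sum_shift[of A Y] sumA unfolding N_def by (simp add: sum.distrib sum_subtractf)
    ultimately have "2 * N * S - N \<le> N * G Y" unfolding G_def using Npos by simp
    then have "N * (1 + 2 * T) \<le> N * G Y" by (simp add: T_S algebra_simps)
    then show "W Y \<ge> 0" unfolding W_def using Npos by simp
  qed
  have sumG: "(\<Sum>Y\<in>UNIV. G Y) = N * S^2"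
  proof -
    have "(\<Sum>Y\<in>UNIV. \<Sum>X\<in>UNIV. A X * A (X - Y)) = (\<Sum>X\<in>UNIV. \<Sum>Y\<in>UNIV. A X * A (X - Y))"
      by (rule sum.swap)
    also have "\<dots> = (\<Sum>X\<in>UNIV. A X * (N * S))"
    proof (rule sum.cong[OF refl])
      fix X :: "bit^'n^'m"
      have "bij_betw (\<lambda>Y. X - Y) UNIV UNIV"
        by (rule bij_betwI[where g="\<lambda>Z. X - Z"]) (auto simp: algebra_simps)
      then have "(\<Sum>Y\<in>UNIV. A (X - Y)) = (\<Sum>Z\<in>UNIV. A Z)" by (rule sum.reindex_bij_betw)
      then show "(\<Sum>Y\<in>UNIV. A X * A (X - Y)) = A X * (N * S)"
        by (simp add: sum_distrib_left[symmetric] sumA)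
    qed
    also have "\<dots> = (N * S) * (N * S)" by (simp add: sum_distrib_right[symmetric] sumA)
    finally show ?thesis unfolding G_def using Npos
      by (simp add: sum_divide_distrib[symmetric] power2_eq_square)
  qed
  have sumW: "(\<Sum>Y\<in>UNIV. W Y) = N * T^2"
  proof -
    have "(\<Sum>Y\<in>UNIV. W Y) = (\<Sum>Y\<in>UNIV. G Y) - N * (1 + 2 * T)"
      unfolding W_def N_def by (simp add: sum_subtractf)
    moreover have "N * S^2 - N * (1 + 2 * T) = N * T^2"
    proof -
      have "S = T + 1" using T_S by simp
      then show ?thesis by (simp add: power2_eq_square algebra_simps)
    qed
    ultimately show ?thesis by (simp add: sumG)
  qed
  have EW: "\<And>Y. Y \<in> E \<Longrightarrow> W Y > t"
  proof -
    fix Y assume "Y \<in> E"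
    then have "S_fun p \<epsilon> (code_extend C Y) > 1 + 2 * T + t" unfolding E_def by simp
    then show "W Y > t" using SG[of Y] unfolding W_def by linarith
  qed
  have tpos: "t > 0" unfolding t_def using Tpos by simp
  have T2: "T^2 = t * T powr 0.5"
  proof -
    have "t * T powr 0.5 = T powr (1.5 + 0.5)" unfolding t_def by (rule powr_add[symmetric])
    also have "\<dots> = T powr 2" by simp
    also have "\<dots> = T^2" using Tpos by simp
    finally show ?thesis by simp
  qed
  have main: "real (card E) < N * T powr 0.5"
  proof (cases "E = {}")
    case True then show ?thesis using Npos Tpos by simp
  next
    case False
    have "real (card E) * t = (\<Sum>Y\<in>E. t)" by simp
    also have "\<dots> < (\<Sum>Y\<in>E. W Y)"
      by (rule sum_strict_mono) (use False EW in auto)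
    also have "\<dots> \<le> (\<Sum>Y\<in>UNIV. W Y)"
      by (rule sum_mono2) (use W0 in auto)
    also have "\<dots> = (N * T powr 0.5) * t" using sumW T2 by simp
    finally show ?thesis using tpos by simp
  qed
  then have "real (card E) / N < T powr 0.5" using Npos by (simp add: divide_less_eq mult.commute)
  then show ?thesis unfolding E_def N_def T_def t_def .
qed

end
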